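(* Let $P_0$ and $R_0$ be non-isomorphic posets, each of size $m$, let $i\ge 1$, and let $P_iR_i$ be as defined below. Then no witness of $D_{i+m+1}(P_iR_i)$ has size less than $|P_iR_i|=2m+2i$.
   Context: For $i\ge0$, $P_i$ (resp. $R_i$) is the poset obtained by placing $P_0$ (resp. $R_0$) above a chain of $i$ elements (every element of $P_0$ above every chain element), and $P_iR_i$ is the disjoint union of $P_i$ and $R_i$. A downset is a downward-closed subset; $D_n(Q)$ is the set of downsets of $Q$ of size $n$ up to isomorphism. A poset $Q$ is a witness of a set $\Gamma_n$ of unlabelled posets of size $n$ if $D_n(Q)=\Gamma_n$. *)

theory Defs
  imports Main
begin

definition fin_poset :: "'a set \<Rightarrow> 'a rel \<Rightarrow> bool" where
  "fin_poset A r \<longleftrightarrow> finite A \<and> r \<subseteq> A \<times> A \<and> (\<forall>x\<in>A. (x, x) \<in> r)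
     \<and> antisym r \<and> trans r"

definition poset_iso :: "'a set \<Rightarrow> 'a rel \<Rightarrow> 'b set \<Rightarrow> 'b rel \<Rightarrow> bool" where
  "poset_iso A r B s \<longleftrightarrow> (\<exists>f. bij_betw f A B \<and>
     (\<forall>x\<in>A. \<forall>y\<in>A. (x, y) \<in> r \<longleftrightarrow> (f x, f y) \<in> s))"

definition is_downset :: "'a set \<Rightarrow> 'a rel \<Rightarrow> 'a set \<Rightarrow> bool" where
  "is_downset A r D \<longleftrightarrow> D \<subseteq> A \<and> (\<forall>x\<in>D. \<forall>y\<in>A. (y, x) \<in> r \<longrightarrow> y \<in> D)"

definition restr :: "'a rel \<Rightarrow> 'a set \<Rightarrow> 'a rel" where
  "restr r D = r \<inter> (D \<times> D)"

text \<open>(C,t) is (up to isomorphism) a member of D_n(A,r).\<close>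
definition in_Dn :: "nat \<Rightarrow> 'a set \<Rightarrow> 'a rel \<Rightarrow> 'b set \<Rightarrow> 'b rel \<Rightarrow> bool" where
  "in_Dn n A r C t \<longleftrightarrow> (\<exists>D. is_downset A r D \<and> card D = n \<and> poset_iso D (restr r D) C t)"

text \<open>D_n(A,r) = D_n(B,s) as sets of isomorphism classes.\<close>
definition same_Dn :: "nat \<Rightarrow> 'a set \<Rightarrow> 'a rel \<Rightarrow> 'b set \<Rightarrow> 'b rel \<Rightarrow> bool" where
  "same_Dn n A r B s \<longleftrightarrow>
     (\<forall>D. is_downset A r D \<and> card D = n \<longrightarrow> in_Dn n B s D (restr r D)) \<and>
     (\<forall>E. is_downset B s E \<and> card E = n \<longrightarrow> in_Dn n A r E (restr s E))"

definition is_witness :: "'b set \<Rightarrow> 'b rel \<Rightarrow> nat \<Rightarrow> 'a set \<Rightarrow> 'a rel \<Rightarrow> bool" where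
  "is_witness Q q n A r \<longleftrightarrow> fin_poset Q q \<and> same_Dn n Q q A r"

text \<open>P_i: the poset (A,r) placed above a chain 0 < 1 < ... < i-1.
  Elements of P_0 are tagged Inl, chain elements Inr.\<close>
definition stack_carrier :: "nat \<Rightarrow> 'a set \<Rightarrow> ('a + nat) set" where
  "stack_carrier i A = Inl ` A \<union> Inr ` {0..<i}"

definition stack_rel :: "nat \<Rightarrow> 'a set \<Rightarrow> 'a rel \<Rightarrow> ('a + nat) rel" where
  "stack_rel i A r =
     {(Inl x, Inl y) | x y. (x, y) \<in> r} \<union>
     {(Inr j, Inr k) | j k. j \<le> k \<and> k < i} \<union>
     {(Inr j, Inl x) | j x. j < i \<and> x \<in> A}"

definition dunion_carrier :: "'a set \<Rightarrow> 'b set \<Rightarrow> ('a + 'b) set" where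
  "dunion_carrier A B = Inl ` A \<union> Inr ` B"

definition dunion_rel :: "'a rel \<Rightarrow> 'b rel \<Rightarrow> ('a + 'b) rel" where
  "dunion_rel r s = {(Inl x, Inl y) | x y. (x, y) \<in> r} \<union> {(Inr x, Inr y) | x y. (x, y) \<in> s}"

end

theory Submission
  imports Defs
begin

lemma iso_sym:
  assumes "poset_iso A r B s" shows "poset_iso B s A r"
proof -
  from assms obtain f where f: "bij_betw f A B"
    and h: "\<forall>x\<in>A. \<forall>y\<in>A. (x,y)\<in>r \<longleftrightarrow> (f x, f y)\<in>s"
    unfolding poset_iso_def by blast
  let ?g = "inv_into A f"
  have g: "bij_betw ?g B A" using f by (rule bij_betw_inv_into)
  have "\<forall>x\<in>B. \<forall>y\<in>B. (x,y)\<in>s \<longleftrightarrow> (?g x, ?g y)\<in>r"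
  proof (intro ballI)
    fix x y assume xy: "x\<in>B" "y\<in>B"
    then have "?g x \<in> A" "?g y \<in> A" using g bij_betw_apply by metis+
    moreover have "f (?g x) = x" "f (?g y) = y" using xy f by (simp_all add: bij_betw_inv_into_right)
    ultimately show "(x,y)\<in>s \<longleftrightarrow> (?g x, ?g y)\<in>r" using h by metis
  qed
  then show ?thesis using g unfolding poset_iso_def by blast
qed

lemma iso_trans:
  assumes "poset_iso A r B s" "poset_iso B s C t" shows "poset_iso A r C t"
proof -
  from assms(1) obtain f where f: "bij_betw f A B"
    and h: "\<forall>x\<in>A. \<forall>y\<in>A. (x,y)\<in>r \<longleftrightarrow> (f x, f y)\<in>s"
    unfolding poset_iso_def by blast
  from assms(2) obtain g where g: "bij_betw g B C"
    and h2: "\<forall>x\<in>B. \<forall>y\<in>B. (x,y)\<in>s \<longleftrightarrow> (g x, g y)\<in>t"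
    unfolding poset_iso_def by blast
  have "bij_betw (g \<circ> f) A C" using f g by (rule bij_betw_trans)
  moreover have "\<forall>x\<in>A. \<forall>y\<in>A. (x,y)\<in>r \<longleftrightarrow> ((g\<circ>f) x, (g\<circ>f) y)\<in>t"
  proof (intro ballI)
    fix x y assume xy: "x \<in> A" "y \<in> A"
    then have "f x \<in> B" "f y \<in> B" using bij_betw_apply[OF f] by blast+
    then show "(x,y)\<in>r \<longleftrightarrow> ((g\<circ>f) x, (g\<circ>f) y)\<in>t" using h h2 xy by simp
  qed
  ultimately show ?thesis unfolding poset_iso_def by blast
qed

lemma iso_dc:
  assumes f: "bij_betw f A B" and h: "\<forall>x\<in>A. \<forall>y\<in>A. (x,y)\<in>r \<longleftrightarrow> (f x, f y)\<in>s"
    and v: "v \<in> A"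
  shows "card {u\<in>A. (u,v)\<in>r} = card {w\<in>B. (w,f v)\<in>s}"
proof -
  have eq: "f ` {u\<in>A. (u,v)\<in>r} = {w\<in>B. (w,f v)\<in>s}"
  proof
    show "f ` {u\<in>A. (u,v)\<in>r} \<subseteq> {w\<in>B. (w,f v)\<in>s}"
    proof
      fix w assume "w \<in> f ` {u\<in>A. (u,v)\<in>r}"
      then obtain u where u: "u \<in> A" "(u,v)\<in>r" "w = f u" by blast
      have "(f u, f v) \<in> s" using h[rule_format, OF u(1) v] u(2) by simp
      moreover have "f u \<in> B" using bij_betw_apply[OF f u(1)] .
      ultimately show "w \<in> {w\<in>B. (w,f v)\<in>s}" using u(3) by blast
    qed
  next
    show "{w\<in>B. (w,f v)\<in>s} \<subseteq> f ` {u\<in>A. (u,v)\<in>r}"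
    proof
      fix w assume w: "w \<in> {w\<in>B. (w,f v)\<in>s}"
      then have "w \<in> f ` A" using f by (simp add: bij_betw_def)
      then obtain u where u: "u \<in> A" "w = f u" by blast
      then have "(u,v) \<in> r" using h[rule_format, OF u(1) v] w by simp
      then show "w \<in> f ` {u\<in>A. (u,v)\<in>r}" using u by blast
    qed
  qed
  have inj: "inj_on f {u\<in>A. (u,v)\<in>r}"
    by (rule inj_on_subset[OF bij_betw_imp_inj_on[OF f]]) blast
  show ?thesis using card_image[OF inj] unfolding eq by simp
qed

lemma stack_dc_Inr:
  assumes "j < i"
  shows "card {u\<in>stack_carrier i A. (u, Inr j) \<in> stack_rel i A p} \<le> i"
proof -
  have sub: "{u\<in>stack_carrier i A. (u, Inr j) \<in> stack_rel i A p} \<subseteq> Inr ` {0..<i}"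
  proof
    fix u assume "u \<in> {u\<in>stack_carrier i A. (u, Inr j) \<in> stack_rel i A p}"
    then have "(u, Inr j) \<in> stack_rel i A p" by simp
    then obtain k where "u = Inr k" "k < i" unfolding stack_rel_def by auto
    then show "u \<in> Inr ` {0..<i}" by simp
  qed
  have c: "card (Inr ` {0..<i} :: ('a + nat) set) = i" by (simp add: card_image)
  have "finite (Inr ` {0..<i} :: ('a + nat) set)" by simp
  from card_mono[OF this sub] c show ?thesis by simp
qed

lemma stack_a1: "k < i \<Longrightarrow> x \<in> A \<Longrightarrow> Inr k \<in> stack_carrier i A \<and> (Inr k, Inl x) \<in> stack_rel i A p"
  by (simp add: stack_carrier_def stack_rel_def)

lemma stack_dc_Inl:
  assumes "finite A" "x \<in> A" "(x,x) \<in> p"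
  shows "card {u\<in>stack_carrier i A. (u, Inl x) \<in> stack_rel i A p} \<ge> Suc i"
proof -
  have sub: "insert (Inl x) (Inr ` {0..<i}) \<subseteq> {u\<in>stack_carrier i A. (u, Inl x) \<in> stack_rel i A p}"
    using assms stack_a1[of _ i x A p] by (auto simp: stack_carrier_def stack_rel_def)
  have fin: "finite {u\<in>stack_carrier i A. (u, Inl x) \<in> stack_rel i A p}"
    using assms(1) by (simp add: stack_carrier_def)
  have "card (insert (Inl x) (Inr ` {0..<i}) :: ('a + nat) set) = Suc i"
    by (subst card_insert_disjoint) (auto simp: card_image)
  then show ?thesis using card_mono[OF fin sub] by simp
qed

lemma strip:
  assumes pA: "fin_poset A p" and pB: "fin_poset B r"
    and iso: "poset_iso (stack_carrier i A) (stack_rel i A p) (stack_carrier i B) (stack_rel i B r)"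
  shows "poset_iso A p B r"
proof -
  from iso obtain f where f: "bij_betw f (stack_carrier i A) (stack_carrier i B)"
    and h: "\<forall>x\<in>stack_carrier i A. \<forall>y\<in>stack_carrier i A. (x,y)\<in>stack_rel i A p \<longleftrightarrow> (f x, f y)\<in>stack_rel i B r"
    unfolding poset_iso_def by blast
  have toL: "\<exists>y\<in>B. f (Inl x) = Inl y" if x: "x \<in> A" for x
  proof -
    have xin: "Inl x \<in> stack_carrier i A" using x by (simp add: stack_carrier_def)
    then have fx: "f (Inl x) \<in> stack_carrier i B" using bij_betw_apply[OF f] by blast
    have eq: "card {u\<in>stack_carrier i A. (u, Inl x) \<in> stack_rel i A p}
       = card {w\<in>stack_carrier i B. (w, f (Inl x)) \<in> stack_rel i B r}"
      using iso_dc[OF f h xin] .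
    have ge: "card {u\<in>stack_carrier i A. (u, Inl x) \<in> stack_rel i A p} \<ge> Suc i"
      using pA x by (intro stack_dc_Inl) (auto simp: fin_poset_def)
    show ?thesis
    proof (cases "f (Inl x)")
      case (Inl y) then show ?thesis using fx by (auto simp: stack_carrier_def)
    next
      case (Inr j)
      then have "j < i" using fx by (auto simp: stack_carrier_def)
      then have "card {w\<in>stack_carrier i B. (w, f (Inl x)) \<in> stack_rel i B r} \<le> i"
        unfolding Inr by (rule stack_dc_Inr)
      then show ?thesis using eq ge by simp
    qed
  qed
  have fromL: "\<exists>x\<in>A. f (Inl x) = Inl y" if y: "y \<in> B" for y
  proof -
    have yin: "Inl y \<in> stack_carrier i B" using y by (simp add: stack_carrier_def)
    then obtain v where v: "v \<in> stack_carrier i A" "f v = Inl y"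
      using bij_betw_imp_surj_on[OF f] by (metis imageE)
    have eq: "card {u\<in>stack_carrier i A. (u, v) \<in> stack_rel i A p}
       = card {w\<in>stack_carrier i B. (w, Inl y) \<in> stack_rel i B r}"
      using iso_dc[OF f h v(1)] v(2) by simp
    have ge: "card {u\<in>stack_carrier i B. (u, Inl y) \<in> stack_rel i B r} \<ge> Suc i"
      using pB y by (intro stack_dc_Inl) (auto simp: fin_poset_def)
    show ?thesis
    proof (cases v)
      case (Inl x) then show ?thesis using v by (auto simp: stack_carrier_def)
    next
      case (Inr j)
      then have "j < i" using v by (auto simp: stack_carrier_def)
      then have "card {u\<in>stack_carrier i A. (u, v) \<in> stack_rel i A p} \<le> i"
        unfolding Inr by (rule stack_dc_Inr)
      then show ?thesis using eq ge by simp
    qed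
  qed
  define g where "g x = projl (f (Inl x))" for x
  have gx: "f (Inl x) = Inl (g x) \<and> g x \<in> B" if "x \<in> A" for x
    using toL[OF that] by (auto simp: g_def)
  have inj: "inj_on f (stack_carrier i A)" using f by (simp add: bij_betw_def)
  have "bij_betw g A B"
    unfolding bij_betw_def
  proof
    show "inj_on g A"
    proof (rule inj_onI)
      fix x y assume xy: "x \<in> A" "y \<in> A" "g x = g y"
      then have "f (Inl x) = f (Inl y)" using gx by metis
      moreover have "Inl x \<in> stack_carrier i A" "Inl y \<in> stack_carrier i A"
        using xy by (auto simp: stack_carrier_def)
      ultimately have "Inl x = (Inl y :: 'a + nat)" using inj_onD[OF inj] by blast
      then show "x = y" by simp
    qed
    show "g ` A = B"
    proof
      show "g ` A \<subseteq> B" using gx by auto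
      show "B \<subseteq> g ` A"
      proof
        fix y assume "y \<in> B"
        then obtain x where "x \<in> A" "f (Inl x) = Inl y" using fromL by blast
        then have "g x = y" using gx by fastforce
        then show "y \<in> g ` A" using \<open>x \<in> A\<close> by blast
      qed
    qed
  qed
  moreover have "\<forall>x\<in>A. \<forall>y\<in>A. (x,y)\<in>p \<longleftrightarrow> (g x, g y)\<in>r"
  proof (intro ballI)
    fix x y assume xy: "x \<in> A" "y \<in> A"
    have "(x,y)\<in>p \<longleftrightarrow> (Inl x, Inl y) \<in> stack_rel i A p" by (simp add: stack_rel_def)
    also have "\<dots> \<longleftrightarrow> (f (Inl x), f (Inl y)) \<in> stack_rel i B r"
    proof -
      have "Inl x \<in> stack_carrier i A" "Inl y \<in> stack_carrier i A"
        using xy by (auto simp: stack_carrier_def)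
      then show ?thesis using h by blast
    qed
    also have "\<dots> \<longleftrightarrow> (g x, g y) \<in> r" using gx[OF xy(1)] gx[OF xy(2)] by (simp add: stack_rel_def)
    finally show "(x,y)\<in>p \<longleftrightarrow> (g x, g y)\<in>r" .
  qed
  ultimately show ?thesis unfolding poset_iso_def by blast
qed

lemma iso_Inl: "poset_iso S rel (Inl ` S) (restr (dunion_rel rel rel') (Inl ` S))"
  unfolding poset_iso_def
  by (rule exI[of _ Inl]) (auto simp: bij_betw_def inj_on_def restr_def dunion_rel_def)

lemma iso_Inr: "poset_iso S rel (Inr ` S) (restr (dunion_rel rel' rel) (Inr ` S))"
  unfolding poset_iso_def
  by (rule exI[of _ Inr]) (auto simp: bij_betw_def inj_on_def restr_def dunion_rel_def)

lemma extract_part: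
  assumes dA: "is_downset Q q A" and f: "bij_betw f A (insert e U)"
    and h: "\<forall>x\<in>A. \<forall>y\<in>A. (x,y) \<in> restr q A \<longleftrightarrow> (f x, f y) \<in> restr t (insert e U)"
    and ne: "\<forall>w\<in>U. (e,w) \<notin> t" and u0: "u0 \<in> U" and least: "\<forall>w\<in>U. (u0,w)\<in>t"
  shows "\<exists>X z. is_downset Q q X \<and> card X = card U \<and> z \<in> X \<and> (\<forall>v\<in>X. (z,v)\<in>q)
     \<and> poset_iso X (restr q X) U (restr t U)"
proof -
  define X where "X = {a\<in>A. f a \<in> U}"
  have XA: "X \<subseteq> A" unfolding X_def by blast
  have fA: "f ` A = insert e U" using f by (simp add: bij_betw_def)
  have injX: "inj_on f X" by (rule inj_on_subset[OF bij_betw_imp_inj_on[OF f] XA])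
  have imX: "f ` X = U"
  proof
    show "f ` X \<subseteq> U" unfolding X_def by blast
    show "U \<subseteq> f ` X"
    proof
      fix u assume u: "u \<in> U"
      then have "u \<in> f ` A" using fA by simp
      then obtain a where "a \<in> A" "u = f a" by blast
      then show "u \<in> f ` X" using u unfolding X_def by blast
    qed
  qed
  have fX: "bij_betw f X U" using injX imX by (simp add: bij_betw_def)
  have AQ: "A \<subseteq> Q" using dA by (simp add: is_downset_def)
  have down: "is_downset Q q X"
    unfolding is_downset_def
  proof
    show "X \<subseteq> Q" using XA AQ by blast
    show "\<forall>x\<in>X. \<forall>y\<in>Q. (y, x) \<in> q \<longrightarrow> y \<in> X"
    proof (intro ballI impI)
      fix x y assume x: "x \<in> X" and y: "y \<in> Q" and yx: "(y,x) \<in> q"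
      have xA: "x \<in> A" using x XA by blast
      have yA: "y \<in> A" using dA xA y yx unfolding is_downset_def by blast
      have "(y,x) \<in> restr q A" using xA yA yx by (simp add: restr_def)
      then have "(f y, f x) \<in> restr t (insert e U)" using h yA xA by blast
      then have t1: "(f y, f x) \<in> t" by (simp add: restr_def)
      have fxU: "f x \<in> U" using x unfolding X_def by blast
      have "f y \<in> insert e U" using bij_betw_apply[OF f yA] .
      moreover have "f y \<noteq> e" using ne fxU t1 by blast
      ultimately have "f y \<in> U" by blast
      then show "y \<in> X" using yA unfolding X_def by blast
    qed
  qed
  have cardX: "card X = card U" using bij_betw_same_card[OF fX] .
  have "u0 \<in> f ` X" using u0 imX by simp
  then obtain z where zX: "z \<in> X" and fz: "f z = u0" by blast
  have zl: "\<forall>v\<in>X. (z,v)\<in>q"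
  proof
    fix v assume v: "v \<in> X"
    have fvU: "f v \<in> U" using v unfolding X_def by blast
    have "(f z, f v) \<in> restr t (insert e U)"
      using least fvU u0 fz by (simp add: restr_def)
    moreover have "z \<in> A" "v \<in> A" using zX v XA by blast+
    ultimately have "(z,v) \<in> restr q A" using h by blast
    then show "(z,v) \<in> q" by (simp add: restr_def)
  qed
  have iso: "poset_iso X (restr q X) U (restr t U)"
    unfolding poset_iso_def
  proof (intro exI conjI)
    show "bij_betw f X U" using fX .
    show "\<forall>x\<in>X. \<forall>y\<in>X. (x, y) \<in> restr q X \<longleftrightarrow> (f x, f y) \<in> restr t U"
    proof (intro ballI)
      fix x y assume x: "x \<in> X" and y: "y \<in> X"
      have xA: "x \<in> A" and yA: "y \<in> A" using x y XA by blast+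
      have fxy: "f x \<in> U" "f y \<in> U" using x y unfolding X_def by blast+
      have "(x, y) \<in> restr q X \<longleftrightarrow> (x,y) \<in> restr q A" using x y xA yA by (simp add: restr_def)
      also have "\<dots> \<longleftrightarrow> (f x, f y) \<in> restr t (insert e U)" using h xA yA by blast
      also have "\<dots> \<longleftrightarrow> (f x, f y) \<in> restr t U" using fxy by (simp add: restr_def)
      finally show "(x, y) \<in> restr q X \<longleftrightarrow> (f x, f y) \<in> restr t U" .
    qed
  qed
  show ?thesis using down cardX zX zl iso by blast
qed

lemma dun_Inl: "(y, Inl w) \<in> dunion_rel a b \<Longrightarrow> \<exists>z. y = Inl z \<and> (z,w)\<in>a"
  by (auto simp: dunion_rel_def)
lemma dun_Inr: "(y, Inr w) \<in> dunion_rel a b \<Longrightarrow> \<exists>z. y = Inr z \<and> (z,w)\<in>b"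
  by (auto simp: dunion_rel_def)
lemma dun_LR: "(Inl x, Inr y) \<notin> dunion_rel a b" "(Inr y, Inl x) \<notin> dunion_rel a b"
  by (auto simp: dunion_rel_def)
lemma dun_LL: "(Inl x, Inl y) \<in> dunion_rel a b \<longleftrightarrow> (x,y) \<in> a"
  by (auto simp: dunion_rel_def)
lemma dun_RR: "(Inr x, Inr y) \<in> dunion_rel a b \<longleftrightarrow> (x,y) \<in> b"
  by (auto simp: dunion_rel_def)
lemma stack_Inr0: "(z, Inr 0) \<in> stack_rel i A p \<Longrightarrow> z = Inr 0"
  by (auto simp: stack_rel_def)
lemma stack_least: "0 < i \<Longrightarrow> z \<in> stack_carrier i A \<Longrightarrow> (Inr 0, z) \<in> stack_rel i A p"
  by (auto simp: stack_carrier_def stack_rel_def)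
lemma stack_card: "finite A \<Longrightarrow> card (stack_carrier i A) = card A + i"
  unfolding stack_carrier_def
  by (subst card_Un_disjoint) (auto simp: card_image)
lemma dc_simps: "Inl z \<in> dunion_carrier A B \<longleftrightarrow> z \<in> A" "Inr w \<in> dunion_carrier A B \<longleftrightarrow> w \<in> B"
  by (auto simp: dunion_carrier_def)

lemma downA:
  assumes "0 < i"
  shows "is_downset (dunion_carrier SP (stack_carrier i R0)) (dunion_rel a (stack_rel i R0 r))
           (insert (Inr (Inr 0)) (Inl ` SP))"
  unfolding is_downset_def
proof
  have "Inr 0 \<in> stack_carrier i R0" using assms by (simp add: stack_carrier_def)
  then show "insert (Inr (Inr 0)) (Inl ` SP) \<subseteq> dunion_carrier SP (stack_carrier i R0)"
    unfolding dunion_carrier_def by blast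
  show "\<forall>x\<in>insert (Inr (Inr 0)) (Inl ` SP). \<forall>y\<in>dunion_carrier SP (stack_carrier i R0).
          (y, x) \<in> dunion_rel a (stack_rel i R0 r) \<longrightarrow> y \<in> insert (Inr (Inr 0)) (Inl ` SP)"
  proof (intro ballI impI)
    fix x y assume x: "x \<in> insert (Inr (Inr 0)) (Inl ` SP)"
      and y: "y \<in> dunion_carrier SP (stack_carrier i R0)"
      and yx: "(y, x) \<in> dunion_rel a (stack_rel i R0 r)"
    show "y \<in> insert (Inr (Inr 0)) (Inl ` SP)"
    proof (cases "x = Inr (Inr 0)")
      case True
      then have yx': "(y, Inr (Inr 0)) \<in> dunion_rel a (stack_rel i R0 r)" using yx by simp
      obtain z where z: "y = Inr z" "(z, Inr 0) \<in> stack_rel i R0 r" using dun_Inr[OF yx'] by blast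
      have "z = Inr 0" using stack_Inr0[OF z(2)] .
      then show ?thesis using z(1) by simp
    next
      case False
      then have "x \<in> Inl ` SP" using x by simp
      then obtain w where "x = Inl w" by blast
      then obtain z where z: "y = Inl z" using dun_Inl[of y w] yx by blast
      then have "z \<in> SP" using y z by (simp add: dc_simps)
      then show ?thesis using z by blast
    qed
  qed
qed

lemma downB:
  assumes "0 < i"
  shows "is_downset (dunion_carrier (stack_carrier i P0) SR) (dunion_rel (stack_rel i P0 p) b)
           (insert (Inl (Inr 0)) (Inr ` SR))"
  unfolding is_downset_def
proof
  have "Inr 0 \<in> stack_carrier i P0" using assms by (simp add: stack_carrier_def)
  then show "insert (Inl (Inr 0)) (Inr ` SR) \<subseteq> dunion_carrier (stack_carrier i P0) SR"
    unfolding dunion_carrier_def by blast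
  show "\<forall>x\<in>insert (Inl (Inr 0)) (Inr ` SR). \<forall>y\<in>dunion_carrier (stack_carrier i P0) SR.
          (y, x) \<in> dunion_rel (stack_rel i P0 p) b \<longrightarrow> y \<in> insert (Inl (Inr 0)) (Inr ` SR)"
  proof (intro ballI impI)
    fix x y assume x: "x \<in> insert (Inl (Inr 0)) (Inr ` SR)"
      and y: "y \<in> dunion_carrier (stack_carrier i P0) SR"
      and yx: "(y, x) \<in> dunion_rel (stack_rel i P0 p) b"
    show "y \<in> insert (Inl (Inr 0)) (Inr ` SR)"
    proof (cases "x = Inl (Inr 0)")
      case True
      then have yx': "(y, Inl (Inr 0)) \<in> dunion_rel (stack_rel i P0 p) b" using yx by simp
      obtain z where z: "y = Inl z" "(z, Inr 0) \<in> stack_rel i P0 p" using dun_Inl[OF yx'] by blast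
      have "z = Inr 0" using stack_Inr0[OF z(2)] .
      then show ?thesis using z(1) by simp
    next
      case False
      then have "x \<in> Inr ` SR" using x by simp
      then obtain w where "x = Inr w" by blast
      then obtain z where z: "y = Inr z" using dun_Inr[of y w] yx by blast
      then have "z \<in> SR" using y z by (simp add: dc_simps)
      then show ?thesis using z by blast
    qed
  qed
qed

theorem mainTheorem5:
  fixes P0 :: "'a set" and p :: "'a rel"
    and R0 :: "'b set" and r :: "'b rel"
    and Q :: "'c set" and q :: "'c rel"
    and m i :: nat
  assumes "fin_poset P0 p" and "fin_poset R0 r"
    and "\<not> poset_iso P0 p R0 r"
    and "card P0 = m" and "card R0 = m"
    and "i \<ge> 1"
    and "is_witness Q q (i + m + 1)
           (dunion_carrier (stack_carrier i P0) (stack_carrier i R0))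
           (dunion_rel (stack_rel i P0 p) (stack_rel i R0 r))"
  shows "card Q \<ge> 2 * m + 2 * i"
proof -
  define n where "n = i + m + 1"
  define SP where "SP = stack_carrier i P0"
  define SR where "SR = stack_carrier i R0"
  define T where "T = dunion_carrier SP SR"
  define t where "t = dunion_rel (stack_rel i P0 p) (stack_rel i R0 r)"
  have Qp: "fin_poset Q q" and sd: "same_Dn n Q q T t"
    using assms(7) unfolding is_witness_def T_def t_def SP_def SR_def n_def by auto
  have finQ: "finite Q" and asq: "antisym q" and rfq: "\<forall>x\<in>Q. (x,x)\<in>q" and trq: "trans q"
    using Qp unfolding fin_poset_def by auto
  have i0: "0 < i" using assms(6) by simp
  have finP: "finite P0" using assms(1) unfolding fin_poset_def by simp
  have finR: "finite R0" using assms(2) unfolding fin_poset_def by simp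
  have cSP: "card SP = m + i" using stack_card[OF finP] assms(4) unfolding SP_def by simp
  have cSR: "card SR = m + i" using stack_card[OF finR] assms(5) unfolding SR_def by simp
  have finSP: "finite SP" using finP unfolding SP_def stack_carrier_def by simp
  have finSR: "finite SR" using finR unfolding SR_def stack_carrier_def by simp
  define UA where "UA = (Inl ` SP :: (('a + nat) + ('b + nat)) set)"
  define UB where "UB = (Inr ` SR :: (('a + nat) + ('b + nat)) set)"
  have cUA: "card UA = m + i" unfolding UA_def using cSP by (simp add: card_image)
  have cUB: "card UB = m + i" unfolding UB_def using cSR by (simp add: card_image)
  have finUA: "finite UA" unfolding UA_def using finSP by simp
  have finUB: "finite UB" unfolding UB_def using finSR by simp
  have sd1: "\<forall>D. is_downset Q q D \<and> card D = n \<longrightarrow> in_Dn n T t D (restr q D)"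
    using sd unfolding same_Dn_def by blast
  have sd2: "\<forall>E. is_downset T t E \<and> card E = n \<longrightarrow> in_Dn n Q q E (restr t E)"
    using sd unfolding same_Dn_def by blast
  have SP0: "Inr 0 \<in> SP" using i0 unfolding SP_def stack_carrier_def by simp
  have SR0: "Inr 0 \<in> SR" using i0 unfolding SR_def stack_carrier_def by simp

  have dA: "is_downset T t (insert (Inr (Inr 0)) UA)"
    using downA[OF i0, of SP R0 "stack_rel i P0 p" r] unfolding T_def t_def UA_def SR_def .
  have cDA: "card (insert (Inr (Inr 0)) UA) = n"
  proof -
    have "Inr (Inr 0) \<notin> UA" unfolding UA_def by blast
    then show ?thesis using finUA cUA unfolding n_def by simp
  qed
  have "in_Dn n Q q (insert (Inr (Inr 0)) UA) (restr t (insert (Inr (Inr 0)) UA))"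
    using sd2 dA cDA by blast
  then obtain A where A: "is_downset Q q A"
    and isoA: "poset_iso A (restr q A) (insert (Inr (Inr 0)) UA) (restr t (insert (Inr (Inr 0)) UA))"
    unfolding in_Dn_def by blast
  then obtain f where f: "bij_betw f A (insert (Inr (Inr 0)) UA)"
    and hA: "\<forall>x\<in>A. \<forall>y\<in>A. (x,y) \<in> restr q A \<longleftrightarrow> (f x, f y) \<in> restr t (insert (Inr (Inr 0)) UA)"
    unfolding poset_iso_def by blast
  have neA: "\<forall>w\<in>UA. (Inr (Inr 0), w) \<notin> t"
  proof
    fix w assume "w \<in> UA"
    then obtain z where "w = Inl z" unfolding UA_def by blast
    then show "(Inr (Inr 0), w) \<notin> t" unfolding t_def using dun_LR(2) by simp
  qed
  have u0A: "Inl (Inr 0) \<in> UA" unfolding UA_def using SP0 by simp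
  have leastA: "\<forall>w\<in>UA. (Inl (Inr 0), w) \<in> t"
  proof
    fix w assume "w \<in> UA"
    then obtain z where z: "w = Inl z" "z \<in> SP" unfolding UA_def by blast
    have "(Inr 0, z) \<in> stack_rel i P0 p" using stack_least[OF i0] z(2) unfolding SP_def by blast
    then show "(Inl (Inr 0), w) \<in> t" unfolding t_def z(1) by (simp add: dun_LL)
  qed
  obtain X zX where X: "is_downset Q q X" and cX: "card X = card UA" and zX: "zX \<in> X"
    and zXl: "\<forall>v\<in>X. (zX,v)\<in>q" and isoX: "poset_iso X (restr q X) UA (restr t UA)"
    using extract_part[OF A f hA neA u0A leastA] by blast

  have dB: "is_downset T t (insert (Inl (Inr 0)) UB)"
    using downB[OF i0, of P0 SR p "stack_rel i R0 r"] unfolding T_def t_def UB_def SP_def .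
  have cDB: "card (insert (Inl (Inr 0)) UB) = n"
  proof -
    have "Inl (Inr 0) \<notin> UB" unfolding UB_def by blast
    then show ?thesis using finUB cUB unfolding n_def by simp
  qed
  have "in_Dn n Q q (insert (Inl (Inr 0)) UB) (restr t (insert (Inl (Inr 0)) UB))"
    using sd2 dB cDB by blast
  then obtain B where B: "is_downset Q q B"
    and isoB: "poset_iso B (restr q B) (insert (Inl (Inr 0)) UB) (restr t (insert (Inl (Inr 0)) UB))"
    unfolding in_Dn_def by blast
  then obtain g where g: "bij_betw g B (insert (Inl (Inr 0)) UB)"
    and hB: "\<forall>x\<in>B. \<forall>y\<in>B. (x,y) \<in> restr q B \<longleftrightarrow> (g x, g y) \<in> restr t (insert (Inl (Inr 0)) UB)"
    unfolding poset_iso_def by blast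
  have neB: "\<forall>w\<in>UB. (Inl (Inr 0), w) \<notin> t"
  proof
    fix w assume "w \<in> UB"
    then obtain z where "w = Inr z" unfolding UB_def by blast
    then show "(Inl (Inr 0), w) \<notin> t" unfolding t_def using dun_LR(1) by simp
  qed
  have u0B: "Inr (Inr 0) \<in> UB" unfolding UB_def using SR0 by simp
  have leastB: "\<forall>w\<in>UB. (Inr (Inr 0), w) \<in> t"
  proof
    fix w assume "w \<in> UB"
    then obtain z where z: "w = Inr z" "z \<in> SR" unfolding UB_def by blast
    have "(Inr 0, z) \<in> stack_rel i R0 r" using stack_least[OF i0] z(2) unfolding SR_def by blast
    then show "(Inr (Inr 0), w) \<in> t" unfolding t_def z(1) by (simp add: dun_RR)
  qed
  obtain Y zY where Y: "is_downset Q q Y" and cY: "card Y = card UB" and zY: "zY \<in> Y"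
    and zYl: "\<forall>v\<in>Y. (zY,v)\<in>q" and isoY: "poset_iso Y (restr q Y) UB (restr t UB)"
    using extract_part[OF B g hB neB u0B leastB] by blast

  have XQ: "X \<subseteq> Q" using X unfolding is_downset_def by simp
  have YQ: "Y \<subseteq> Q" using Y unfolding is_downset_def by simp
  have finX: "finite X" using finite_subset[OF XQ finQ] .
  have finY: "finite Y" using finite_subset[OF YQ finQ] .
  show ?thesis
  proof (cases "X \<inter> Y = {}")
    case True
    have "card (X \<union> Y) = card X + card Y" using card_Un_disjoint[OF finX finY True] .
    moreover have "card (X \<union> Y) \<le> card Q" using card_mono[OF finQ] XQ YQ by simp
    ultimately show ?thesis using cX cY cUA cUB by simp
  next
    case False
    then obtain w where wX: "w \<in> X" and wY: "w \<in> Y" by blast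
    have zXQ: "zX \<in> Q" using zX XQ by blast
    have zYQ: "zY \<in> Q" using zY YQ by blast
    have "(zX, w) \<in> q" using zXl wX by blast
    then have zXY: "zX \<in> Y" using Y wY zXQ unfolding is_downset_def by blast
    have "(zY, w) \<in> q" using zYl wY by blast
    then have zYX: "zY \<in> X" using X wX zYQ unfolding is_downset_def by blast
    have "(zX, zY) \<in> q" using zXl zYX by blast
    moreover have "(zY, zX) \<in> q" using zYl zXY by blast
    ultimately have zeq: "zX = zY" using asq unfolding antisym_def by blast
    show ?thesis
    proof (cases "X = Y")
      case True
      have i1: "poset_iso SP (stack_rel i P0 p) UA (restr t UA)"
        unfolding UA_def t_def by (rule iso_Inl)
      have i2: "poset_iso SR (stack_rel i R0 r) UB (restr t UB)"
        unfolding UB_def t_def by (rule iso_Inr)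
      have "poset_iso SP (stack_rel i P0 p) X (restr q X)" using iso_trans[OF i1 iso_sym[OF isoX]] .
      moreover have "poset_iso X (restr q X) UB (restr t UB)" using isoY True by simp
      ultimately have "poset_iso SP (stack_rel i P0 p) UB (restr t UB)" by (rule iso_trans)
      then have "poset_iso SP (stack_rel i P0 p) SR (stack_rel i R0 r)"
        using iso_sym[OF i2] by (rule iso_trans)
      then have "poset_iso P0 p R0 r" using strip[OF assms(1) assms(2)] unfolding SP_def SR_def by blast
      then show ?thesis using assms(3) by blast
    next
      case False
      have "\<not> Y \<subseteq> X"
      proof
        assume "Y \<subseteq> X"
        moreover have "card Y = card X" using cX cY cUA cUB by simp
        ultimately have "Y = X" using card_subset_eq[OF finX] by blast
        then show False using False by simp
      qed
      then obtain y0 where "y0 \<in> Y - X" by blast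
      define dc where "dc v = card {u\<in>Q. (u,v)\<in>q}" for v
      obtain y where y: "y \<in> Y - X" and ymin: "\<forall>v. v \<in> Y - X \<longrightarrow> dc y \<le> dc v"
        using ex_has_least_nat[of "\<lambda>v. v \<in> Y - X" y0 dc] \<open>y0 \<in> Y - X\<close> by blast
      have yQ: "y \<in> Q" using y YQ by blast
      have below: "u \<in> X" if u: "u \<in> Q" "(u,y) \<in> q" "u \<noteq> y" for u
      proof (rule ccontr)
        assume uX: "u \<notin> X"
        have "u \<in> Y" using Y y u unfolding is_downset_def by blast
        then have "dc y \<le> dc u" using ymin uX by blast
        moreover have "{v\<in>Q. (v,u)\<in>q} \<subset> {v\<in>Q. (v,y)\<in>q}"
        proof
          show "{v\<in>Q. (v,u)\<in>q} \<subseteq> {v\<in>Q. (v,y)\<in>q}"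
            using trq u(2) unfolding trans_def by blast
          have "y \<in> {v\<in>Q. (v,y)\<in>q}" using yQ rfq by blast
          moreover have "y \<notin> {v\<in>Q. (v,u)\<in>q}"
          proof
            assume "y \<in> {v\<in>Q. (v,u)\<in>q}"
            then have "(y,u) \<in> q" by simp
            then have "u = y" using u(2) asq unfolding antisym_def by blast
            then show False using u(3) by simp
          qed
          ultimately show "{v\<in>Q. (v,u)\<in>q} \<noteq> {v\<in>Q. (v,y)\<in>q}" by blast
        qed
        then have "dc u < dc y" unfolding dc_def by (rule psubset_card_mono[rotated]) (simp add: finQ)
        ultimately show False by simp
      qed
      define D where "D = insert y X"
      have dD: "is_downset Q q D"
        unfolding is_downset_def
      proof
        show "D \<subseteq> Q" unfolding D_def using yQ XQ by blast
        show "\<forall>x\<in>D. \<forall>ya\<in>Q. (ya, x) \<in> q \<longrightarrow> ya \<in> D"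
        proof (intro ballI impI)
          fix x v assume x: "x \<in> D" and v: "v \<in> Q" and vx: "(v,x) \<in> q"
          show "v \<in> D"
          proof (cases "x = y")
            case True
            then show ?thesis using below[OF v] vx unfolding D_def by blast
          next
            case False
            then have "x \<in> X" using x unfolding D_def by blast
            then show ?thesis using X v vx unfolding is_downset_def D_def by blast
          qed
        qed
      qed
      have cD: "card D = n" unfolding D_def n_def using finX y cX cUA by simp
      have zD: "zX \<in> D" unfolding D_def using zX by blast
      have zDl: "\<forall>v\<in>D. (zX, v) \<in> q"
      proof
        fix v assume "v \<in> D"
        then have "v = y \<or> v \<in> X" unfolding D_def by blast
        then show "(zX, v) \<in> q"
        proof
          assume "v = y"
          then show ?thesis using zYl y zeq by blast
        next
          assume "v \<in> X"
          then show ?thesis using zXl by blast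
        qed
      qed
      have "in_Dn n T t D (restr q D)" using sd1 dD cD by blast
      then obtain D' where D': "is_downset T t D'" and cD': "card D' = n"
        and isoD: "poset_iso D' (restr t D') D (restr q D)"
        unfolding in_Dn_def by blast
      then obtain h where h: "bij_betw h D' D"
        and hh: "\<forall>x\<in>D'. \<forall>y\<in>D'. (x,y) \<in> restr t D' \<longleftrightarrow> (h x, h y) \<in> restr q D"
        unfolding poset_iso_def by blast
      have "zX \<in> h ` D'" using zD h by (simp add: bij_betw_def)
      then obtain e where eD: "e \<in> D'" and he: "h e = zX" by blast
      have le: "\<forall>w\<in>D'. (e,w) \<in> t"
      proof
        fix w assume wD: "w \<in> D'"
        have hw: "h w \<in> D" using bij_betw_apply[OF h wD] .
        have "(h e, h w) \<in> restr q D" using zDl hw zD he by (simp add: restr_def)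
        then have "(e, w) \<in> restr t D'" using hh eD wD by blast
        then show "(e,w) \<in> t" by (simp add: restr_def)
      qed
      have D'T: "D' \<subseteq> Inl ` SP \<union> Inr ` SR" using D' unfolding is_downset_def T_def dunion_carrier_def by simp
      have "\<not> D' \<subseteq> Inl ` SP"
      proof
        assume "D' \<subseteq> Inl ` SP"
        then have "card D' \<le> card (Inl ` SP :: (('a + nat) + ('b + nat)) set)"
          using card_mono finSP by blast
        then show False using cD' cSP unfolding n_def by (simp add: card_image)
      qed
      then obtain a where aD: "a \<in> D'" and aR: "a \<in> Inr ` SR" using D'T by blast
      have "\<not> D' \<subseteq> Inr ` SR"
      proof
        assume "D' \<subseteq> Inr ` SR"
        then have "card D' \<le> card (Inr ` SR :: (('a + nat) + ('b + nat)) set)"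
          using card_mono finSR by blast
        then show False using cD' cSR unfolding n_def by (simp add: card_image)
      qed
      then obtain b where bD: "b \<in> D'" and bL: "b \<in> Inl ` SP" using D'T by blast
      obtain a' where a': "a = Inr a'" using aR by blast
      obtain b' where b': "b = Inl b'" using bL by blast
      have ea: "(e, Inr a') \<in> t" using le aD a' by blast
      have eb: "(e, Inl b') \<in> t" using le bD b' by blast
      show ?thesis
      proof (cases e)
        case (Inl e')
        then have "(Inl e', Inr a') \<in> t" using ea by simp
        then show ?thesis using dun_LR(1)[of e' a' "stack_rel i P0 p" "stack_rel i R0 r"] unfolding t_def by blast
      next
        case (Inr e')
        then have "(Inr e', Inl b') \<in> t" using eb by simp
        then show ?thesis using dun_LR(2)[of e' b' "stack_rel i P0 p" "stack_rel i R0 r"] unfolding t_def by blast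
      qed
    qed
  qed
qed

end
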